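(* Let $A,H,B,K$ be logically independent events. Then (i) every $(x,y)\in[0,1]^2$ is a coherent assessment on $\{A|H,B|K\}$; (ii) for such $(x,y)$, $z$ is a coherent extension to the quasi disjunction $\mathcal D(A|H,B|K)=(AH\vee BK)|(H\vee K)$ if and only if $z\in[l,u]$, where $$l=T_0^H(x,y)=\begin{cases}\frac{xy}{x+y-xy},&(x,y)\ne(0,0),\\0,&(x,y)=(0,0),\end{cases}\qquad u=S_L(x,y)=\min(x+y,1).$$ *)

theory Defs
  imports Main "HOL-Library.Indicator_Function"
begin

text \<open>Events are subsets of a space of possible worlds 'w. A conditional event
  E|H is the pair (E, H).\<close>

definition logically_independent :: "'w set list \<Rightarrow> bool" where
  "logically_independent Es \<longleftrightarrow>
     (\<forall>bs::bool list. length bs = length Es \<longrightarrow>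
        (\<exists>\<omega>. \<forall>i<length Es. (\<omega> \<in> Es ! i \<longleftrightarrow> bs ! i)))"

definition gain :: "('w set \<times> 'w set) list \<Rightarrow> real list \<Rightarrow> (nat \<Rightarrow> real) \<Rightarrow> 'w \<Rightarrow> real" where
  "gain F p s \<omega> = (\<Sum>i<length F. s i * indicator (snd (F ! i)) \<omega> *
                        (indicator (fst (F ! i)) \<omega> - p ! i))"

definition coherent :: "('w set \<times> 'w set) list \<Rightarrow> real list \<Rightarrow> bool" where
  "coherent F p \<longleftrightarrow> length p = length F \<and>
     (\<forall>s. (\<exists>\<omega>\<in>\<Union>(snd ` set F). gain F p s \<omega> \<le> 0) \<and>
          (\<exists>\<omega>\<in>\<Union>(snd ` set F). gain F p s \<omega> \<ge> 0))"

definition quasi_disj :: "'w set \<times> 'w set \<Rightarrow> 'w set \<times> 'w set \<Rightarrow> 'w set \<times> 'w set" where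
  "quasi_disj AH BK = ((fst AH \<inter> snd AH) \<union> (fst BK \<inter> snd BK), snd AH \<union> snd BK)"

definition T0H :: "real \<Rightarrow> real \<Rightarrow> real" where
  "T0H x y = (if x = 0 \<and> y = 0 then 0 else x * y / (x + y - x * y))"

definition SL :: "real \<Rightarrow> real \<Rightarrow> real" where
  "SL x y = min (x + y) 1"

end

theory Submission
  imports Defs
begin
lemma world:
  assumes "logically_independent [A, H, B, K]"
  shows "\<exists>\<omega>. (\<omega> \<in> A \<longleftrightarrow> a) \<and> (\<omega> \<in> H \<longleftrightarrow> h) \<and> (\<omega> \<in> B \<longleftrightarrow> b) \<and> (\<omega> \<in> K \<longleftrightarrow> k)"
proof -
  have "length [a,h,b,k] = length [A, H, B, K]" by simp
  with assms obtain \<omega> where w: "\<forall>i<length [A, H, B, K]. (\<omega> \<in> [A, H, B, K] ! i \<longleftrightarrow> [a,h,b,k] ! i)"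
    unfolding logically_independent_def by blast
  have "\<omega> \<in> A \<longleftrightarrow> a" using w[rule_format, of 0] by simp
  moreover have "\<omega> \<in> H \<longleftrightarrow> h" using w[rule_format, of 1] by simp
  moreover have "\<omega> \<in> B \<longleftrightarrow> b" using w[rule_format, of 2] by (simp add: numeral_2_eq_2)
  moreover have "\<omega> \<in> K \<longleftrightarrow> k" using w[rule_format, of 3] by (simp add: numeral_3_eq_3)
  ultimately show ?thesis by blast
qed
lemma gain2: "gain [(A, H), (B, K)] [x, y] s \<omega> =
   s 0 * indicator H \<omega> * (indicator A \<omega> - x) + s 1 * indicator K \<omega> * (indicator B \<omega> - y)"
  by (simp add: gain_def numeral_2_eq_2)

lemma gain3: "gain [(A, H), (B, K), quasi_disj (A, H) (B, K)] [x, y, z] s \<omega> =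
   s 0 * indicator H \<omega> * (indicator A \<omega> - x) + s 1 * indicator K \<omega> * (indicator B \<omega> - y)
   + s 2 * indicator (H \<union> K) \<omega> * (indicator ((A \<inter> H) \<union> (B \<inter> K)) \<omega> - z)"
  by (simp add: gain_def numeral_3_eq_3 numeral_2_eq_2 quasi_disj_def)

lemma pos3:
  fixes w1 w2 w3 g1 g2 g3 :: real
  assumes "w1 \<ge> 0" "w2 \<ge> 0" "w3 \<ge> 0" "w1 + w2 + w3 > 0" "g1 > 0" "g2 > 0" "g3 > 0"
  shows "w1 * g1 + w2 * g2 + w3 * g3 > 0"
proof -
  have "w1 * g1 \<ge> 0" "w2 * g2 \<ge> 0" "w3 * g3 \<ge> 0" using assms by auto
  moreover have "w1 > 0 \<or> w2 > 0 \<or> w3 > 0" using assms by linarith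
  hence "w1 * g1 > 0 \<or> w2 * g2 > 0 \<or> w3 * g3 > 0" using assms by auto
  ultimately show ?thesis by linarith
qed

lemma coh_wit:
  assumes "length p = length F" "ua \<in> \<Union>(snd ` set F)" "ub \<in> \<Union>(snd ` set F)" "uc \<in> \<Union>(snd ` set F)"
    "qa \<ge> 0" "qb \<ge> 0" "qc \<ge> 0" "qa + qb + qc > 0"
    "\<And>s. qa * gain F p s ua + qb * gain F p s ub + qc * gain F p s uc = 0"
  shows "coherent F p"
  unfolding coherent_def
proof (intro conjI allI)
  show "length p = length F" by fact
next
  fix s
  show "\<exists>\<omega>\<in>\<Union>(snd ` set F). gain F p s \<omega> \<le> 0"
  proof (rule ccontr)
    assume "\<not> ?thesis"
    hence "gain F p s ua > 0" "gain F p s ub > 0" "gain F p s uc > 0" using assms(2-4) by force+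
    from pos3[OF assms(5-8) this] assms(9)[of s] show False by linarith
  qed
  show "\<exists>\<omega>\<in>\<Union>(snd ` set F). gain F p s \<omega> \<ge> 0"
  proof (rule ccontr)
    assume "\<not> ?thesis"
    hence "- gain F p s ua > 0" "- gain F p s ub > 0" "- gain F p s uc > 0" using assms(2-4) by force+
    from pos3[OF assms(5-8) this] assms(9)[of s] show False by linarith
  qed
qed

lemma interp:
  assumes "coherent [(A, H), (B, K), quasi_disj (A, H) (B, K)] [x, y, z1]"
    "coherent [(A, H), (B, K), quasi_disj (A, H) (B, K)] [x, y, z2]"
    "z1 \<le> z" "z \<le> z2"
  shows "coherent [(A, H), (B, K), quasi_disj (A, H) (B, K)] [x, y, z]"
proof -
  let ?F = "[(A, H), (B, K), quasi_disj (A, H) (B, K)]"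
  have U: "\<Union>(snd ` set ?F) = H \<union> K" by (auto simp: quasi_disj_def)
  have eq: "gain ?F [x,y,z] s \<omega> = gain ?F [x,y,zz] s \<omega> + s 2 * (zz - z)"
    if "\<omega> \<in> H \<union> K" for s \<omega> zz using that by (simp add: gain3 algebra_simps)
  show ?thesis unfolding coherent_def U
  proof (intro conjI allI)
    show "length [x, y, z] = length ?F" by simp
  next
    fix s
    show "\<exists>\<omega>\<in>H \<union> K. gain ?F [x, y, z] s \<omega> \<le> 0"
    proof (cases "s 2 * (z1 - z) \<le> 0")
      case True
      from assms(1) obtain \<omega> where "\<omega> \<in> H \<union> K" "gain ?F [x,y,z1] s \<omega> \<le> 0"
        unfolding coherent_def U by blast
      with True eq[of \<omega> s z1] show ?thesis by force
    next
      case False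
      hence F: "s 2 * (z2 - z) \<le> 0" using assms(3,4)
        by (auto simp: mult_le_0_iff)
      from assms(2) obtain \<omega> where "\<omega> \<in> H \<union> K" "gain ?F [x,y,z2] s \<omega> \<le> 0"
        unfolding coherent_def U by blast
      with F eq[of \<omega> s z2] show ?thesis by force
    qed
    show "\<exists>\<omega>\<in>H \<union> K. gain ?F [x, y, z] s \<omega> \<ge> 0"
    proof (cases "s 2 * (z1 - z) \<ge> 0")
      case True
      from assms(1) obtain \<omega> where "\<omega> \<in> H \<union> K" "gain ?F [x,y,z1] s \<omega> \<ge> 0"
        unfolding coherent_def U by blast
      with True eq[of \<omega> s z1] show ?thesis by force
    next
      case False
      hence F: "s 2 * (z2 - z) \<ge> 0" using assms(3,4)
        by (auto simp: zero_le_mult_iff)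
      from assms(2) obtain \<omega> where "\<omega> \<in> H \<union> K" "gain ?F [x,y,z2] s \<omega> \<ge> 0"
        unfolding coherent_def U by blast
      with F eq[of \<omega> s z2] show ?thesis by force
    qed
  qed
qed

theorem proposition2:
  fixes A H B K :: "'w set"
  assumes "logically_independent [A, H, B, K]"
  shows "(\<forall>x y. x \<in> {0..1} \<and> y \<in> {0..1} \<longrightarrow> coherent [(A, H), (B, K)] [x, y])
       \<and> (\<forall>x y z. x \<in> {0..1} \<and> y \<in> {0..1} \<longrightarrow>
            (coherent [(A, H), (B, K), quasi_disj (A, H) (B, K)] [x, y, z]
               \<longleftrightarrow> z \<in> {T0H x y .. SL x y}))"
proof -
  let ?F = "[(A, H), (B, K), quasi_disj (A, H) (B, K)]"
  have U: "\<Union>(snd ` set ?F) = H \<union> K" by (auto simp: quasi_disj_def)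
  have U2: "\<Union>(snd ` set [(A, H), (B, K)]) = H \<union> K" by auto
  obtain w10 where w10: "w10 \<in> A" "w10 \<in> H" "w10 \<notin> B" "w10 \<in> K" using world[OF assms, of True True False True] by auto
  obtain w01 where w01: "w01 \<notin> A" "w01 \<in> H" "w01 \<in> B" "w01 \<in> K" using world[OF assms, of False True True True] by auto
  obtain w00 where w00: "w00 \<notin> A" "w00 \<in> H" "w00 \<notin> B" "w00 \<in> K" using world[OF assms, of False True False True] by auto
  obtain w11 where w11: "w11 \<in> A" "w11 \<in> H" "w11 \<in> B" "w11 \<in> K" using world[OF assms, of True True True True] by auto
  obtain wa where wa: "wa \<notin> A" "wa \<in> H" "wa \<notin> K" using world[OF assms, of False True False False] by auto
  obtain wb where wb: "wb \<notin> H" "wb \<notin> B" "wb \<in> K" using world[OF assms, of False False False True] by auto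
  have part1: "coherent [(A, H), (B, K)] [x, y]" if "x \<in> {0..1}" "y \<in> {0..1}" for x y
  proof (cases "x + y \<le> 1")
    case True
    show ?thesis
      apply (rule coh_wit[where ua=w10 and ub=w01 and uc=w00 and qa=x and qb=y and qc="1-x-y"])
      using that True w10 w01 w00 by (auto simp: gain2 algebra_simps)
  next
    case False
    show ?thesis
      apply (rule coh_wit[where ua=w11 and ub=w10 and uc=w01 and qa="x+y-1" and qb="1-y" and qc="1-x"])
      using that False w10 w01 w11 by (auto simp: gain2 algebra_simps)
  qed
  have cohU: "coherent ?F [x, y, SL x y]" if "x \<in> {0..1}" "y \<in> {0..1}" for x y
  proof (cases "x + y \<le> 1")
    case True
    hence S: "SL x y = x + y" by (simp add: SL_def)
    show ?thesis unfolding S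
      apply (rule coh_wit[where ua=w10 and ub=w01 and uc=w00 and qa=x and qb=y and qc="1-x-y"])
      using that True w10 w01 w00 by (auto simp: gain3 algebra_simps)
  next
    case False
    hence S: "SL x y = 1" by (simp add: SL_def)
    show ?thesis unfolding S
      apply (rule coh_wit[where ua=w11 and ub=w10 and uc=w01 and qa="x+y-1" and qb="1-y" and qc="1-x"])
      using that False w10 w01 w11 by (auto simp: gain3 algebra_simps)
  qed
  have cohL: "coherent ?F [x, y, T0H x y]" if "x \<in> {0..1}" "y \<in> {0..1}" for x y
  proof (cases "x = 0 \<and> y = 0")
    case True
    hence "T0H x y = SL x y" by (simp add: T0H_def SL_def)
    thus ?thesis using cohU[OF that] by simp
  next
    case False
    define d where "d = x + y - x * y"
    have dpos: "d > 0"
      proof -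
      have "x * y \<le> y" using that by (simp add: mult_left_le_one_le)
      thus ?thesis using False that unfolding d_def by (cases "x = 0") auto
    qed
    define l where "l = T0H x y"
    have ld: "l * d = x * y" using False dpos unfolding l_def T0H_def d_def by auto
    have w1: "y * (1 - x) \<ge> 0" "x * (1 - y) \<ge> 0" "x * y \<ge> 0" using that by auto
    have sw: "y * (1 - x) + x * (1 - y) + x * y > 0" using dpos unfolding d_def by (simp add: algebra_simps)
    have key: "y * (1 - x) * (s 0 * (0 - x) + s 2 * (0 - l))
       + x * (1 - y) * (s 1 * (0 - y) + s 2 * (0 - l))
       + x * y * (s 0 * (1 - x) + s 1 * (1 - y) + s 2 * (1 - l)) = 0" for s :: "nat \<Rightarrow> real"
    proof -
      have "y * (1 - x) * (s 0 * (0 - x) + s 2 * (0 - l))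
       + x * (1 - y) * (s 1 * (0 - y) + s 2 * (0 - l))
       + x * y * (s 0 * (1 - x) + s 1 * (1 - y) + s 2 * (1 - l)) = s 2 * (x * y - l * d)"
        unfolding d_def by (simp add: algebra_simps)
      thus ?thesis using ld by simp
    qed
    show ?thesis unfolding l_def[symmetric]
      apply (rule coh_wit[where ua=wa and ub=wb and uc=w11 and qa="y * (1 - x)" and qb="x * (1 - y)" and qc="x * y"])
      using w1 sw wa wb w11 key by (auto simp: gain3)
  qed
  have onlyif: "z \<in> {T0H x y .. SL x y}" if "x \<in> {0..1}" "y \<in> {0..1}" "coherent ?F [x, y, z]" for x y z
  proof -
    have C: "\<And>s. (\<exists>\<omega>\<in>H \<union> K. gain ?F [x,y,z] s \<omega> \<le> 0) \<and> (\<exists>\<omega>\<in>H \<union> K. gain ?F [x,y,z] s \<omega> \<ge> 0)"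
      using that(3) unfolding coherent_def U by blast
    have z1: "z \<le> 1"
    proof -
      obtain \<omega> where "\<omega> \<in> H \<union> K" "gain ?F [x,y,z] (\<lambda>i. if i = 2 then 1 else 0) \<omega> \<ge> 0"
        using C by blast
      thus ?thesis by (cases "\<omega> \<in> A"; cases "\<omega> \<in> H"; cases "\<omega> \<in> B"; cases "\<omega> \<in> K"; simp add: gain3)
    qed
    have z2: "z \<le> x + y"
    proof -
      obtain \<omega> where "\<omega> \<in> H \<union> K" "gain ?F [x,y,z] (\<lambda>i. if i = 2 then 1 else -1) \<omega> \<ge> 0"
        using C by blast
      thus ?thesis using that(1,2)
        by (cases "\<omega> \<in> A"; cases "\<omega> \<in> H"; cases "\<omega> \<in> B"; cases "\<omega> \<in> K"; simp add: gain3)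
    qed
    have z3: "T0H x y \<le> z"
    proof (cases "x = 0 \<and> y = 0")
      case True
      obtain \<omega> where "\<omega> \<in> H \<union> K" "gain ?F [x,y,z] (\<lambda>i. if i = 2 then -1 else 0) \<omega> \<ge> 0"
        using C by blast
      hence "0 \<le> z"
        by (cases "\<omega> \<in> A"; cases "\<omega> \<in> H"; cases "\<omega> \<in> B"; cases "\<omega> \<in> K"; simp add: gain3)
      thus ?thesis using True by (simp add: T0H_def)
    next
      case False
      define d where "d = x + y - x * y"
      have dpos: "d > 0"
        proof -
      have "x * y \<le> y" using that by (simp add: mult_left_le_one_le)
      thus ?thesis using False that unfolding d_def by (cases "x = 0") auto
    qed
      obtain \<omega> where "\<omega> \<in> H \<union> K" "gain ?F [x,y,z] (\<lambda>i. if i = 0 then -y else if i = 1 then -x else d) \<omega> \<le> 0"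
        using C by blast
      moreover have "x * y \<le> y" "y * x \<le> x" "0 \<le> x * y" using that(1,2)
        by (simp_all add: mult_left_le_one_le)
      ultimately have "x * y - d * z \<le> 0" using that(1,2) unfolding d_def
        by (cases "\<omega> \<in> A"; cases "\<omega> \<in> H"; cases "\<omega> \<in> B"; cases "\<omega> \<in> K"; simp add: gain3 algebra_simps)
      hence "x * y / d \<le> z" using dpos by (simp add: divide_le_eq mult.commute)
      thus ?thesis using False by (auto simp add: T0H_def d_def)
    qed
    show ?thesis using z1 z2 z3 by (simp add: SL_def)
  qed
  show ?thesis
  proof (intro conjI allI impI)
    fix x y assume "x \<in> {0..1::real} \<and> y \<in> {0..1::real}"
    thus "coherent [(A, H), (B, K)] [x, y]" using part1 by blast
  next
    fix x y z assume xy: "x \<in> {0..1::real} \<and> y \<in> {0..1::real}"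
    show "coherent ?F [x, y, z] \<longleftrightarrow> z \<in> {T0H x y .. SL x y}"
    proof
      assume "coherent ?F [x, y, z]" thus "z \<in> {T0H x y .. SL x y}" using onlyif xy by blast
    next
      assume "z \<in> {T0H x y .. SL x y}"
      thus "coherent ?F [x, y, z]" using interp[OF cohL cohU] xy by auto
    qed
  qed
qed

end
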